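(* Let $X$ be a real normed space of dimension $n\ge1$. There is a least positive constant $C(X)$ such that $$\mathcal{H}(A,\operatorname{Co}(A))\le C(X)\,\sup_{t\in[0,1]}\mathcal{H}(tA+(1-t)A,A)$$ for every nonempty $A\subseteq X$, and this constant satisfies $$\log_2 n\le C(X)\le \kappa(n).$$ In particular $\log_2 n\le C(X)\le\lceil\log_2(n+1)\rceil\le \log_2 n+1$.
   Context: $d(x,A)=\inf\{\|x-a\|:a\in A\}$. The Hausdorff distance is $\mathcal{H}(A,B)=\sup\{d(x,B),d(y,A):x\in A,y\in B\}$; $\operatorname{Co}(A)$ is the convex hull. $\Delta_n=\{t\in\mathbb{R}^{n+1}: t_i\ge0,\sum t_i=1\}$ with vertices $e_1,\dots,e_{n+1}$. A function $f$ on a convex set $C$ is approximately convex if $f(tx+(1-t)y)\le tf(x)+(1-t)f(y)+1$ for all $x,y\in C$, $t\in[0,1]$. $\kappa(n)=\sup\{f(x): x\in\Delta_n,\ f:\Delta_n\to\mathbb{R}\text{ approximately convex with } f(e_i)\le0\ \forall i\}$. *)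

theory Defs
  imports "HOL-Analysis.Analysis"
begin

text \<open>Hausdorff distance, valued in the extended reals (it may be infinite).
  d(x,B) is infdist x B (the infimum of norms, for nonempty B).\<close>
definition haus :: "'a::real_normed_vector set \<Rightarrow> 'a set \<Rightarrow> ereal" where
  "haus A B = Sup ((\<lambda>x. ereal (infdist x B)) ` A \<union> (\<lambda>y. ereal (infdist y A)) ` B)"

definition mix :: "real \<Rightarrow> 'a::real_vector set \<Rightarrow> 'a set" where
  "mix t A = {t *\<^sub>R a + (1 - t) *\<^sub>R b | a b. a \<in> A \<and> b \<in> A}"

text \<open>Standard simplex Delta_n in R^(n+1), coordinates indexed by 0..n.\<close>
definition std_simplex :: "nat \<Rightarrow> (nat \<Rightarrow> real) set" where
  "std_simplex n = {x. (\<forall>i. 0 \<le> x i) \<and> (\<forall>i>n. x i = 0) \<and> (\<Sum>i\<le>n. x i) = 1}"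

definition vertex :: "nat \<Rightarrow> nat \<Rightarrow> real" where
  "vertex j = (\<lambda>i. if i = j then 1 else 0)"

definition approx_convex_on :: "(nat \<Rightarrow> real) set \<Rightarrow> ((nat \<Rightarrow> real) \<Rightarrow> real) \<Rightarrow> bool" where
  "approx_convex_on C f \<longleftrightarrow> (\<forall>x\<in>C. \<forall>y\<in>C. \<forall>t\<in>{0..1}.
      f (\<lambda>i. t * x i + (1 - t) * y i) \<le> t * f x + (1 - t) * f y + 1)"

definition kappa :: "nat \<Rightarrow> ereal" where
  "kappa n = Sup {ereal (f x) | f x. x \<in> std_simplex n \<and> approx_convex_on (std_simplex n) f
      \<and> (\<forall>j\<le>n. f (vertex j) \<le> 0)}"

definition hull_const_ok :: "'a::real_normed_vector itself \<Rightarrow> real \<Rightarrow> bool" where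
  "hull_const_ok _ C \<longleftrightarrow> (\<forall>A :: 'a set. A \<noteq> {} \<longrightarrow>
      haus A (convex hull A) \<le> ereal C * (SUP t\<in>{0..1}. haus (mix t A) A))"

end

theory Submission
  imports Defs
begin


lemma span_norm_lower:
  fixes w :: "'a::real_normed_vector"
  assumes "y - s *\<^sub>R w \<in> span S"
  shows "\<bar>s\<bar> * infdist w (span S) \<le> norm y"
proof (cases "s = 0")
  case True then show ?thesis by simp
next
  case False
  have "-(inverse s) *\<^sub>R (y - s *\<^sub>R w) \<in> span S"
    using span_mul[OF assms, of "-(inverse s)"] by simp
  then have "infdist w (span S) \<le> dist w (-(inverse s) *\<^sub>R (y - s *\<^sub>R w))"
    by (rule infdist_le)
  also have "dist w (-(inverse s) *\<^sub>R (y - s *\<^sub>R w)) = norm ((inverse s) *\<^sub>R y)"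
    using False by (simp add: dist_norm algebra_simps)
  also have "\<dots> = norm y / \<bar>s\<bar>" by (simp add: divide_inverse_commute)
  finally show ?thesis using False by (simp add: field_simps)
qed

lemma closed_span_finite:
  fixes S :: "'a::real_normed_vector set"
  assumes "finite S"
  shows "closed (span S)"
  using assms
proof (induction S rule: finite_induct)
  case empty
  then show ?case by simp
next
  case (insert w S)
  show ?case
  proof (cases "w \<in> span S")
    case True
    then have "span (insert w S) = span S" by (rule span_redundant)
    then show ?thesis using insert by simp
  next
    case False
    define d where "d = infdist w (span S)"
    have dpos: "d > 0" unfolding d_def
      using infdist_pos_not_in_closed[OF insert.IH _ False] span_zero by blast
    show ?thesis
      unfolding closed_sequential_limits
    proof (intro allI impI)
      fix x l assume H: "(\<forall>k. x k \<in> span (insert w S)) \<and> x \<longlonglongrightarrow> l"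
      have "\<forall>k. \<exists>c. x k - c *\<^sub>R w \<in> span S" using H by (simp add: span_insert)
      then obtain s where s: "\<And>k. x k - s k *\<^sub>R w \<in> span S" by metis
      have diff: "\<bar>s m - s k\<bar> * d \<le> dist (x m) (x k)" for m k
      proof -
        have "(x m - x k) - (s m - s k) *\<^sub>R w = (x m - s m *\<^sub>R w) - (x k - s k *\<^sub>R w)"
          by (simp add: algebra_simps)
        also have "\<dots> \<in> span S" using s by (simp add: span_diff)
        finally show ?thesis using span_norm_lower[of "x m - x k" "s m - s k" w S]
          by (simp add: d_def dist_norm mult.commute)
      qed
      have "Cauchy x" using H LIMSEQ_imp_Cauchy by blast
      have "Cauchy s"
        unfolding Cauchy_def
      proof (intro allI impI)
        fix e :: real assume "e > 0"
        then have "e * d > 0" using dpos by simp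
        then obtain M where M: "\<forall>m\<ge>M. \<forall>k\<ge>M. dist (x m) (x k) < e * d"
          using \<open>Cauchy x\<close> unfolding Cauchy_def by blast
        show "\<exists>M. \<forall>m\<ge>M. \<forall>k\<ge>M. dist (s m) (s k) < e"
        proof (intro exI allI impI)
          fix m k assume "M \<le> m" "M \<le> k"
          then have "\<bar>s m - s k\<bar> * d < e * d" using M diff le_less_trans by blast
          then show "dist (s m) (s k) < e" using dpos by (simp add: dist_real_def)
        qed
      qed
      then obtain \<sigma> where "s \<longlonglongrightarrow> \<sigma>" using Cauchy_convergent_iff convergent_def by blast
      then have "(\<lambda>k. x k - s k *\<^sub>R w) \<longlonglongrightarrow> l - \<sigma> *\<^sub>R w"
        using H by (intro tendsto_intros) auto
      then have "l - \<sigma> *\<^sub>R w \<in> span S"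
        using insert.IH s unfolding closed_sequential_limits by (metis (no_types, lifting))
      then show "l \<in> span (insert w S)" by (auto simp: span_insert)
    qed
  qed
qed



lemma not_in_span_rest:
  assumes "inj_on bb I" "independent (bb ` I)" "j \<in> I"
  shows "bb j \<notin> span (bb ` (I - {j}))"
proof -
  have "bb ` (I - {j}) = bb ` I - {bb j}" using assms(1,3) by (auto simp: inj_on_def)
  then show ?thesis using assms(2,3) unfolding dependent_def by auto
qed

lemma coord_bound:
  fixes bb :: "nat \<Rightarrow> 'a::real_normed_vector"
  assumes "finite I" "inj_on bb I" "independent (bb ` I)"
  shows "\<exists>m>0. \<forall>c. \<forall>j\<in>I. \<bar>c j\<bar> * m \<le> norm (\<Sum>i\<in>I. c i *\<^sub>R bb i)"
proof -
  define d where "d j = infdist (bb j) (span (bb ` (I - {j})))" for j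
  have dpos: "d j > 0" if "j \<in> I" for j
    unfolding d_def
    by (rule infdist_pos_not_in_closed)
       (use closed_span_finite[of "bb ` (I - {j})"] assms not_in_span_rest[OF assms(2,3) that] span_zero in auto)
  have key: "\<bar>c j\<bar> * d j \<le> norm (\<Sum>i\<in>I. c i *\<^sub>R bb i)" if "j \<in> I" for c j
  proof -
    have "(\<Sum>i\<in>I. c i *\<^sub>R bb i) - c j *\<^sub>R bb j = (\<Sum>i\<in>I - {j}. c i *\<^sub>R bb i)"
      using assms(1) that by (simp add: sum_diff1)
    also have "\<dots> \<in> span (bb ` (I - {j}))"
      by (intro span_sum span_scale span_base) auto
    finally show ?thesis using span_norm_lower unfolding d_def by blast
  qed
  show ?thesis
  proof (cases "I = {}")
    case True then show ?thesis by (intro exI[of _ 1]) auto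
  next
    case False
    define m where "m = Min (d ` I)"
    have "m > 0" unfolding m_def using False assms(1) dpos by (subst Min_gr_iff) auto
    moreover have "m \<le> d j" if "j \<in> I" for j unfolding m_def using assms(1) that by auto
    ultimately show ?thesis using key
      by (intro exI[of _ m]) (meson abs_ge_zero dual_order.trans mult_left_mono conjI allI ballI)
  qed
qed



definition ent :: "nat \<Rightarrow> (nat \<Rightarrow> real) \<Rightarrow> real" where
  "ent n x = (\<Sum>i<n. - (x i * log 2 (x i)))"

lemma binent_le_1:
  fixes t :: real assumes "0 \<le> t" "t \<le> 1"
  shows "-(t * log 2 t) - ((1 - t) * log 2 (1 - t)) \<le> 1"
proof (cases "t = 0 \<or> t = 1")
  case True then show ?thesis by auto
next
  case False
  then have t: "0 < t" "t < 1" using assms by auto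
  have l2: "ln 2 > (0::real)" by simp
  have a: "ln (1 / (2 * t)) \<le> 1 / (2 * t) - 1" using t by (intro ln_le_minus_one) auto
  have b: "ln (1 / (2 * (1 - t))) \<le> 1 / (2 * (1 - t)) - 1" using t by (intro ln_le_minus_one) auto
  have a': "- ln t - ln 2 \<le> 1 / (2 * t) - 1" using a t by (simp add: ln_div ln_mult)
  have hl: "ln (1 / (2 * s)) = - ln s - ln 2" if "s > 0" for s :: real using that by (simp add: ln_div ln_mult)
  have "ln (1 / (2 * (1 - t))) = - ln (1 - t) - ln 2" using t by (intro hl) simp
  then have b': "- ln (1 - t) - ln 2 \<le> 1 / (2 * (1 - t)) - 1" using b by simp
  have a'': "t * (- ln t - ln 2) \<le> 1/2 - t"
  proof -
    have "t * (- ln t - ln 2) \<le> t * (1 / (2 * t) - 1)" using mult_left_mono[OF a', of t] t by simp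
    also have "t * (1 / (2 * t) - 1) = 1/2 - t" using t by (simp add: field_simps)
    finally show ?thesis .
  qed
  have b'': "(1 - t) * (- ln (1 - t) - ln 2) \<le> 1/2 - (1 - t)"
  proof -
    have "(1 - t) * (- ln (1 - t) - ln 2) \<le> (1 - t) * (1 / (2 * (1 - t)) - 1)" using mult_left_mono[OF b', of "1 - t"] t by simp
    also have "(1 - t) * (1 / (2 * (1 - t)) - 1) = 1/2 - (1 - t)" using t by (simp add: field_simps)
    finally show ?thesis .
  qed
  have "-(t * ln t) - ((1 - t) * ln (1 - t)) \<le> ln 2"
    using a'' b'' by (simp add: algebra_simps)
  then show ?thesis using l2 unfolding log_def by (simp add: field_simps)
qed

lemma xlog_split:
  fixes a b :: real assumes "0 \<le> a" "0 \<le> b"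
  shows "-((a + b) * log 2 (a + b)) \<le> -(a * log 2 a) - (b * log 2 b)"
proof (cases "a = 0 \<or> b = 0")
  case True then show ?thesis by auto
next
  case False
  then have ab: "0 < a" "0 < b" using assms by auto
  have "log 2 a \<le> log 2 (a + b)" "log 2 b \<le> log 2 (a + b)" using ab by auto
  then have "a * log 2 a + b * log 2 b \<le> a * log 2 (a + b) + b * log 2 (a + b)"
    using ab by (intro add_mono mult_left_mono) auto
  then show ?thesis by (simp add: algebra_simps)
qed

lemma xlog_scale:
  fixes t x :: real assumes "0 \<le> t" "0 \<le> x"
  shows "-((t * x) * log 2 (t * x)) = t * (-(x * log 2 x)) + x * (-(t * log 2 t))"
proof (cases "t = 0 \<or> x = 0")
  case True then show ?thesis by auto
next
  case False
  then have "0 < t" "0 < x" using assms by auto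
  then show ?thesis by (simp add: log_mult algebra_simps)
qed

lemma ent_approx:
  assumes x: "\<forall>i. 0 \<le> x i" "(\<Sum>i<n. x i) = 1"
      and y: "\<forall>i. 0 \<le> y i" "(\<Sum>i<n. y i) = 1"
      and t: "0 \<le> t" "t \<le> 1"
  shows "ent n (\<lambda>i. t * x i + (1 - t) * y i) \<le> t * ent n x + (1 - t) * ent n y + 1"
proof -
  have "ent n (\<lambda>i. t * x i + (1 - t) * y i)
      \<le> (\<Sum>i<n. -((t * x i) * log 2 (t * x i)) - (((1 - t) * y i) * log 2 ((1 - t) * y i)))"
    unfolding ent_def using x y t by (intro sum_mono xlog_split) auto
  also have "\<dots> = (\<Sum>i<n. t * (-(x i * log 2 (x i))) + x i * (-(t * log 2 t))
                  + ((1 - t) * (-(y i * log 2 (y i))) + y i * (-((1 - t) * log 2 (1 - t)))))"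
    using x y t by (intro sum.cong refl) (simp add: xlog_scale)
  also have "\<dots> = t * ent n x + (\<Sum>i<n. x i) * (-(t * log 2 t))
                  + ((1 - t) * ent n y + (\<Sum>i<n. y i) * (-((1 - t) * log 2 (1 - t))))"
    unfolding ent_def by (simp add: sum.distrib sum_distrib_left sum_distrib_right sum_subtractf sum_negf)
  also have "\<dots> = t * ent n x + (1 - t) * ent n y + (-(t * log 2 t) - ((1 - t) * log 2 (1 - t)))"
    using x y by simp
  also have "\<dots> \<le> t * ent n x + (1 - t) * ent n y + 1" using binent_le_1[OF t] by simp
  finally show ?thesis .
qed

lemma ent_lower:
  assumes "\<forall>i. 0 \<le> x i" "(\<Sum>i<n. x i) = 1" "\<forall>i<n. x i \<le> M" "0 < M"
  shows "- log 2 M \<le> ent n x"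
proof -
  have "(\<Sum>i<n. -(x i * log 2 M)) \<le> ent n x"
    unfolding ent_def
  proof (intro sum_mono)
    fix i assume "i \<in> {..<n}"
    show "-(x i * log 2 M) \<le> -(x i * log 2 (x i))"
    proof (cases "x i = 0")
      case False
      then have "0 < x i" using assms(1) by (simp add: order_less_le)
      then have "log 2 (x i) \<le> log 2 M" using assms(3) \<open>i \<in> {..<n}\<close> assms(4) by auto
      then show ?thesis using \<open>0 < x i\<close> by (simp add: mult_left_mono)
    qed simp
  qed
  also have "(\<Sum>i<n. -(x i * log 2 M)) = - log 2 M"
    using assms(2) by (simp add: sum_negf sum_distrib_right[symmetric])
  finally show ?thesis by simp
qed

lemma ent_nonneg:
  assumes "\<forall>i. 0 \<le> x i" "(\<Sum>i<n. x i) = 1"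
  shows "0 \<le> ent n x"
  unfolding ent_def
proof (intro sum_nonneg)
  fix i assume i: "i \<in> {..<n}"
  have "x i \<le> 1" using assms member_le_sum[of i "{..<n}" x] i by auto
  show "0 \<le> -(x i * log 2 (x i))"
  proof (cases "x i = 0")
    case False
    then have "0 < x i" using assms(1) by (simp add: order_less_le)
    then have "log 2 (x i) \<le> 0" using \<open>x i \<le> 1\<close> by simp
    then show ?thesis using \<open>0 < x i\<close> by (simp add: mult_nonneg_nonpos)
  qed simp
qed

lemma ent_vertex: "ent n (\<lambda>i. if i = j then 1 else 0) = 0"
  unfolding ent_def by (intro sum.neutral) auto



lemma infdist_ge_lemma:
  assumes "A \<noteq> {}" "\<And>a. a \<in> A \<Longrightarrow> e \<le> dist x a"
  shows "e \<le> infdist x A"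
  using assms by (simp add: infdist_notempty cINF_greatest)

lemma infdist_approx:
  assumes "A \<noteq> {}" "infdist x A < r"
  obtains a where "a \<in> A" "dist x a < r"
  using assms by (auto simp: infdist_notempty cINF_less_iff)

lemma haus_ge: "x \<in> B \<Longrightarrow> ereal (infdist x A) \<le> haus A B"
  unfolding haus_def by (intro Sup_upper) auto

lemma haus_le:
  assumes "\<And>x. x \<in> A \<Longrightarrow> infdist x B \<le> r" "\<And>y. y \<in> B \<Longrightarrow> infdist y A \<le> r"
  shows "haus A B \<le> ereal r"
  unfolding haus_def using assms by (intro Sup_least) auto

lemma subset_mix: "A \<subseteq> mix t A"
proof
  fix a assume "a \<in> A"
  have "a = t *\<^sub>R a + (1 - t) *\<^sub>R a" by (simp add: algebra_simps)
  then show "a \<in> mix t A" unfolding mix_def using \<open>a \<in> A\<close> by blast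
qed

lemma ok_use:
  fixes A :: "'a::real_normed_vector set"
  assumes ok: "hull_const_ok TYPE('a) C" and ne: "A \<noteq> {}" and x: "x \<in> convex hull A" and r: "r \<ge> 0"
    and bd: "\<And>t z. t \<in> {0..1} \<Longrightarrow> z \<in> mix t A \<Longrightarrow> infdist z A \<le> r"
  shows "infdist x A \<le> max C 0 * r"
proof -
  define D where "D = (SUP t\<in>{0..1}. haus (mix t A) A)"
  have h: "haus A (convex hull A) \<le> ereal C * D" using ok ne unfolding hull_const_ok_def D_def by blast
  have x1: "ereal (infdist x A) \<le> haus A (convex hull A)" using haus_ge[OF x] .
  have Dle: "D \<le> ereal r" unfolding D_def
  proof (intro SUP_least haus_le)
    fix t :: real and y assume "t \<in> {0..1}" "y \<in> A"
    then have "y \<in> mix t A" using subset_mix by blast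
    then show "infdist y (mix t A) \<le> r" using r by simp
  qed (use bd in auto)
  obtain a where a: "a \<in> A" using ne by blast
  have "ereal (infdist a (mix 0 A)) \<le> haus (mix 0 A) A" using haus_ge[OF a] .
  also have "\<dots> \<le> D" unfolding D_def by (intro SUP_upper) auto
  finally have D0: "0 \<le> D" using a subset_mix[of A 0] by (simp add: subset_iff zero_ereal_def)
  show ?thesis
  proof (cases "C \<ge> 0")
    case True
    have "ereal C * D \<le> ereal C * ereal r" using True Dle by (intro ereal_mult_left_mono) auto
    then have "ereal (infdist x A) \<le> ereal (C * r)" using h x1 by (metis order.trans times_ereal.simps(1))
    then show ?thesis using True by simp
  next
    case False
    have "ereal C * D \<le> 0" using False D0 by (cases D) (auto simp: mult_nonpos_nonneg)
    then have "infdist x A \<le> 0" using h x1 by (metis order.trans zero_ereal_def ereal_less_eq(3))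
    then show ?thesis using False by simp
  qed
qed

lemma two_point:
  fixes w :: "'a::real_normed_vector"
  assumes ok: "hull_const_ok TYPE('a) C" and w: "w \<noteq> 0"
  shows "1 \<le> C"
proof -
  define A where "A = {0, w}"
  have x: "(1/2) *\<^sub>R w \<in> convex hull A"
  proof -
    have "(1/2) *\<^sub>R (0::'a) + (1/2) *\<^sub>R w \<in> convex hull A"
      by (intro convexD[OF convex_convex_hull]) (auto simp: A_def hull_inc)
    then show ?thesis by simp
  qed
  have near: "infdist (r *\<^sub>R w) A \<le> norm w / 2" if "0 \<le> r" "r \<le> 1" for r
  proof (cases "r \<le> 1/2")
    case True
    have "infdist (r *\<^sub>R w) A \<le> dist (r *\<^sub>R w) 0" by (rule infdist_le) (simp add: A_def)
    also have "\<dots> = r * norm w" using that by simp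
    also have "\<dots> \<le> norm w / 2" using mult_right_mono[of r "1/2" "norm w"] True by simp
    finally show ?thesis .
  next
    case False
    have "infdist (r *\<^sub>R w) A \<le> dist (r *\<^sub>R w) w" by (rule infdist_le) (simp add: A_def)
    also have "dist (r *\<^sub>R w) w = norm ((1 - r) *\<^sub>R w)" by (simp add: dist_norm algebra_simps norm_minus_commute)
    also have "\<dots> = (1 - r) * norm w" using that by simp
    also have "\<dots> \<le> norm w / 2" using mult_right_mono[of "1 - r" "1/2" "norm w"] False by simp
    finally show ?thesis .
  qed
  have bd: "infdist z A \<le> norm w / 2" if T: "t \<in> {0..1}" "z \<in> mix t A" for t z
  proof -
    obtain a b where z: "z = t *\<^sub>R a + (1 - t) *\<^sub>R b" "a \<in> A" "b \<in> A"
      using T(2) unfolding mix_def by blast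
    have "z \<in> {0, w, t *\<^sub>R w, (1 - t) *\<^sub>R w}" using z by (auto simp: A_def algebra_simps)
    then show ?thesis using near[of 0] near[of 1] near[of t] near[of "1 - t"] T(1) by auto
  qed
  have "infdist ((1/2) *\<^sub>R w) A \<le> max C 0 * (norm w / 2)"
    using ok_use[OF ok _ x _ bd] by (auto simp: A_def)
  moreover have "norm w / 2 \<le> infdist ((1/2) *\<^sub>R w) A"
  proof (rule infdist_ge_lemma)
    fix a assume "a \<in> A"
    have e1: "w - (1/2) *\<^sub>R w = (1/2) *\<^sub>R w" by (simp add: algebra_simps scaleR_2[symmetric] del: scaleR_2)
    have "dist ((1/2) *\<^sub>R w) w = norm ((1/2) *\<^sub>R w)" by (simp add: dist_norm norm_minus_commute e1)
    then have "dist ((1/2) *\<^sub>R w) w = norm w / 2" by simp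
    moreover have "dist ((1/2) *\<^sub>R w) 0 = norm w / 2" by simp
    ultimately show "norm w / 2 \<le> dist ((1/2) *\<^sub>R w) a" using \<open>a \<in> A\<close> by (auto simp: A_def)
  qed (simp add: A_def)
  ultimately have "norm w / 2 \<le> max C 0 * (norm w / 2)" by linarith
  then have "1 \<le> max C 0" using w by (simp add: field_simps)
  then show ?thesis by linarith
qed



lemma lb_eps:
  fixes n :: nat
  assumes dimn: "dim (UNIV :: 'a::real_normed_vector set) = n" and n2: "n \<ge> 2"
    and ok: "hull_const_ok TYPE('a) C" and C1: "1 \<le> C" and eps: "0 < \<epsilon>"
  shows "log 2 n - \<epsilon> \<le> C * (1 + \<epsilon>)"
proof -
  obtain B :: "'a set" where B: "independent B" "UNIV \<subseteq> span B" "card B = n"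
    using basis_exists[of "UNIV::'a set"] dimn by auto
  have finB: "finite B" using B(3) n2 by (metis card.infinite not_numeral_le_zero)
  obtain bb where bb: "bij_betw bb {0..<n} B" using ex_bij_betw_nat_finite[OF finB] B(3) by auto
  have injbb: "inj_on bb {0..<n}" using bb bij_betw_imp_inj_on by blast
  have bbimg: "bb ` {0..<n} = B" using bb bij_betw_imp_surj_on by blast
  define I where "I = {1..<n}"
  define H where "H = span (bb ` I)"
  define w where "w = bb 0"
  have IB: "{0..<n} - {0} = I" unfolding I_def by auto
  have wH: "w \<notin> H" using not_in_span_rest[OF injbb _, of 0] B(1) bbimg IB n2
    unfolding H_def w_def by auto
  have closedH: "closed H" unfolding H_def by (intro closed_span_finite) (simp add: I_def)
  have Hne: "H \<noteq> {}" unfolding H_def using span_zero by blast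
  define d where "d = infdist w H"
  have dpos: "d > 0" unfolding d_def using infdist_pos_not_in_closed[OF closedH Hne wH] .
  have "infdist w H < d * (1 + \<epsilon>)" using dpos eps by (simp add: d_def)
  then obtain h0 where h0: "h0 \<in> H" "dist w h0 < d * (1 + \<epsilon>)"
    using infdist_approx[OF Hne] by blast
  define u where "u = w - h0"
  have normu: "norm u < d * (1 + \<epsilon>)" using h0 by (simp add: u_def dist_norm)
  have finI: "finite I" by (simp add: I_def)
  have indI: "independent (bb ` I)"
  proof -
    have "bb ` I \<subseteq> B" unfolding I_def bbimg[symmetric] by (intro image_mono) auto
    then show ?thesis using independent_mono[OF B(1)] by blast
  qed
  have injI: "inj_on bb I" using injbb by (rule inj_on_subset) (auto simp: I_def)
  obtain m where m: "m > 0" "\<And>c j. j \<in> I \<Longrightarrow> \<bar>c j\<bar> * m \<le> norm (\<Sum>i\<in>I. c i *\<^sub>R bb i)"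
    using coord_bound[OF finI injI indI] by blast
  define v where "v i = (if i = 0 then 0 else bb i)" for i
  define P where "P x = (\<Sum>i<n. x i *\<^sub>R v i)" for x
  define Simp where "Simp = {x::nat\<Rightarrow>real. (\<forall>i. 0 \<le> x i) \<and> (\<Sum>i<n. x i) = 1}"
  define L where "L = log 2 (real n)"
  have L1: "L \<ge> 1" unfolding L_def using n2 by simp
  define \<eta> where "\<eta> = (2 powr \<epsilon> - 1) / n"
  have "2 powr \<epsilon> > 1" using eps by (simp add: gr_one_powr)
  then have etapos: "\<eta> > 0" unfolding \<eta>_def using n2 by simp
  define m0 where "m0 = m * \<eta> / n"
  have m0pos: "m0 > 0" unfolding m0_def using m(1) etapos n2 by simp
  define lam where "lam = L * (d + norm u) / m0"
  define A where "A = {lam *\<^sub>R P x + s *\<^sub>R u | x s. x \<in> Simp \<and> ent n x \<le> s}"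
  define e where "e j = (\<lambda>i::nat. if i = j then 1 else (0::real))" for j
  define p where "p = (\<lambda>i::nat. 1 / real n)"
  have vH: "v i \<in> H" if "i < n" for i
    using that unfolding v_def H_def I_def by (auto intro: span_base span_zero)
  have PH: "P x \<in> H" for x
    unfolding P_def H_def by (intro span_sum span_scale) (use vH H_def in auto)
  have Plin: "P (\<lambda>i. t * x i + (1 - t) * y i) = t *\<^sub>R P x + (1 - t) *\<^sub>R P y" for t x y
    unfolding P_def by (simp add: scaleR_add_left sum.distrib scaleR_sum_right)
  have Pe: "P (e j) = v j" if "j < n" for j
  proof -
    have "P (e j) = (\<Sum>i<n. if i = j then v i else 0)"
      unfolding P_def e_def by (intro sum.cong) auto
    also have "\<dots> = v j" using that by (simp add: sum.delta)
    finally show ?thesis .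
  qed
  have eSimp: "e j \<in> Simp" if "j < n" for j
    using that unfolding Simp_def e_def by (auto simp: sum.delta)
  have ente: "ent n (e j) = 0" for j unfolding e_def by (rule ent_vertex)
  have eA: "lam *\<^sub>R P (e j) + 0 *\<^sub>R u \<in> A" if "j < n" for j
    unfolding A_def using eSimp[OF that] ente by fastforce
  have Ane: "A \<noteq> {}" using eA[of 0] n2 by auto
  have inhull: "lam *\<^sub>R P p \<in> convex hull A"
  proof -
    have "(\<Sum>j<n. (1 / real n) *\<^sub>R (lam *\<^sub>R P (e j) + 0 *\<^sub>R u)) \<in> convex hull A"
      using n2 eA by (intro convex_sum) (auto intro: hull_inc)
    also have "(\<Sum>j<n. (1 / real n) *\<^sub>R (lam *\<^sub>R P (e j) + 0 *\<^sub>R u)) = lam *\<^sub>R P p"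
    proof -
      have "(\<Sum>j<n. (1 / real n) *\<^sub>R (lam *\<^sub>R P (e j) + 0 *\<^sub>R u)) = (\<Sum>j<n. (1 / real n) *\<^sub>R (lam *\<^sub>R v j))"
        using Pe by (intro sum.cong) auto
      also have "\<dots> = lam *\<^sub>R P p" unfolding P_def p_def scaleR_sum_right by (intro sum.cong) auto
      finally show ?thesis .
    qed
    finally show ?thesis .
  qed
  have bd: "infdist z A \<le> norm u" if T: "t \<in> {0..1}" "z \<in> mix t A" for t z
  proof -
    obtain a b where z: "z = t *\<^sub>R a + (1 - t) *\<^sub>R b" "a \<in> A" "b \<in> A"
      using T(2) unfolding mix_def by blast
    obtain x s1 where a: "a = lam *\<^sub>R P x + s1 *\<^sub>R u" "x \<in> Simp" "ent n x \<le> s1"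
      using z(2) unfolding A_def by blast
    obtain y s2 where b: "b = lam *\<^sub>R P y + s2 *\<^sub>R u" "y \<in> Simp" "ent n y \<le> s2"
      using z(3) unfolding A_def by blast
    define z' where "z' = (\<lambda>i. t * x i + (1 - t) * y i)"
    define \<sigma> where "\<sigma> = t * s1 + (1 - t) * s2"
    have t01: "0 \<le> t" "t \<le> 1" using T(1) by auto
    have z'S: "z' \<in> Simp" using a(2) b(2) t01 unfolding Simp_def z'_def
      by (auto simp: sum.distrib sum_distrib_left[symmetric])
    have zz: "z = lam *\<^sub>R P z' + \<sigma> *\<^sub>R u"
      unfolding z(1) a(1) b(1) z'_def Plin \<sigma>_def by (simp add: algebra_simps)
    have "ent n z' \<le> t * ent n x + (1 - t) * ent n y + 1"
      unfolding z'_def using a(2) b(2) t01 unfolding Simp_def by (intro ent_approx) auto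
    also have "\<dots> \<le> \<sigma> + 1" unfolding \<sigma>_def using a(3) b(3) t01
      by (intro add_mono mult_left_mono) auto
    finally have ez: "ent n z' \<le> \<sigma> + 1" .
    define q where "q = lam *\<^sub>R P z' + (max \<sigma> (ent n z')) *\<^sub>R u"
    have qA: "q \<in> A" unfolding q_def A_def using z'S by fastforce
    have "dist z q = norm ((max \<sigma> (ent n z') - \<sigma>) *\<^sub>R u)"
      unfolding zz q_def dist_norm by (simp add: algebra_simps norm_minus_commute)
    also have "\<dots> = (max \<sigma> (ent n z') - \<sigma>) * norm u" by simp
    also have "\<dots> \<le> 1 * norm u" using ez by (intro mult_right_mono) auto
    finally show ?thesis using infdist_le[OF qA, of z] by simp
  qed
  have far: "m0 \<le> norm (P p - P x)" if xS: "x \<in> Simp" and ex: "ent n x < L - \<epsilon>" for x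
  proof (rule ccontr)
    assume "\<not> m0 \<le> norm (P p - P x)"
    then have small: "norm (P p - P x) < m0" by simp
    have x0: "\<forall>i. 0 \<le> x i" and x1: "(\<Sum>i<n. x i) = 1" using xS unfolding Simp_def by auto
    have split: "{..<n} = insert 0 I" unfolding I_def using n2 by auto
    have "P p - P x = (\<Sum>i<n. (1 / real n - x i) *\<^sub>R v i)"
      unfolding P_def p_def by (simp add: sum_subtractf scaleR_diff_left)
    also have "\<dots> = (\<Sum>i\<in>I. (1 / real n - x i) *\<^sub>R bb i)"
      unfolding split using finI by (simp add: I_def v_def)
    finally have PP: "P p - P x = (\<Sum>i\<in>I. (1 / real n - x i) *\<^sub>R bb i)" .
    have cI: "\<bar>1 / real n - x j\<bar> < \<eta> / n" if "j \<in> I" for j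
    proof -
      have "\<bar>1 / real n - x j\<bar> * m < m * \<eta> / n"
        using m(2)[of j "\<lambda>i. 1 / real n - x i", OF that] PP small unfolding m0_def by simp
      then have "\<bar>1 / real n - x j\<bar> * m < (\<eta> / n) * m" by (simp add: field_simps)
      then show ?thesis using m(1) by (simp only: mult_less_cancel_right_pos)
    qed
    have f1: "x 0 + (\<Sum>i\<in>I. x i) = 1" using x1 finI unfolding split by (simp add: I_def)
    have f2: "(\<Sum>i\<in>I. 1 / real n - x i) \<le> (\<Sum>i\<in>I. \<eta> / n)"
      using cI by (intro sum_mono) (meson abs_less_iff less_imp_le)
    have f3: "(\<Sum>i\<in>I. 1 / real n - x i) = (real n - 1) / n - (\<Sum>i\<in>I. x i)"
      using n2 by (simp add: sum_subtractf I_def of_nat_diff)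
    have f4: "(\<Sum>i\<in>I. \<eta> / n) = (real n - 1) * (\<eta> / n)"
      using n2 by (simp add: I_def of_nat_diff)
    have f5: "(real n - 1) * (\<eta> / n) \<le> \<eta>" using n2 etapos by (simp add: field_simps)
    have f6: "1 - (real n - 1) / n = 1 / n" using n2 by (simp add: field_simps)
    have x0b: "x 0 \<le> 1 / n + \<eta>" using f1 f2 f3 f4 f5 f6 by linarith
    have xb: "\<forall>i<n. x i \<le> 1 / n + \<eta>"
    proof (intro allI impI)
      fix i assume "i < n"
      show "x i \<le> 1 / n + \<eta>"
      proof (cases "i = 0")
        case True then show ?thesis using x0b by simp
      next
        case False
        then have "i \<in> I" using \<open>i < n\<close> by (simp add: I_def)
        then have "x i < 1 / n + \<eta> / n" using cI[of i] by (simp add: abs_less_iff)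
        also have "\<eta> / n \<le> \<eta>" using n2 etapos by (simp add: field_simps)
        finally show ?thesis by simp
      qed
    qed
    have Meq: "1 / n + \<eta> = 2 powr \<epsilon> / n" unfolding \<eta>_def using n2 by (simp add: field_simps)
    have "- log 2 (1 / n + \<eta>) \<le> ent n x"
    proof -
      have "0 < 1 / real n + \<eta>" using etapos n2 by (simp add: add_pos_pos)
      then show ?thesis using ent_lower[OF x0 x1 xb] by blast
    qed
    moreover have "- log 2 (1 / n + \<eta>) = L - \<epsilon>"
      unfolding Meq L_def using n2 by (simp add: log_divide)
    ultimately show False using ex by simp
  qed
  have lower: "d * (L - \<epsilon>) \<le> infdist (lam *\<^sub>R P p) A"
  proof (rule infdist_ge_lemma[OF Ane])
    fix a assume "a \<in> A"
    then obtain x s where a: "a = lam *\<^sub>R P x + s *\<^sub>R u" "x \<in> Simp" "ent n x \<le> s"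
      unfolding A_def by blast
    have s0: "0 \<le> s" using ent_nonneg[of x n] a(2,3) unfolding Simp_def by auto
    define yv where "yv = lam *\<^sub>R P p - a"
    have "yv - (- s) *\<^sub>R w = lam *\<^sub>R (P p - P x) + s *\<^sub>R h0"
      unfolding yv_def a(1) u_def by (simp add: algebra_simps)
    also have "\<dots> \<in> H" using PH h0(1) unfolding H_def
      by (intro span_add span_scale span_diff) auto
    finally have "\<bar>- s\<bar> * d \<le> norm yv"
      using span_norm_lower[of yv "- s" w "bb ` I"] unfolding H_def d_def by simp
    then have sd: "s * d \<le> norm yv" using s0 by simp
    have "d * (L - \<epsilon>) \<le> norm yv"
    proof (cases "L - \<epsilon> \<le> s")
      case True
      then show ?thesis using sd dpos by (metis mult.commute mult_left_mono less_imp_le order_trans)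
    next
      case False
      then have "ent n x < L - \<epsilon>" using a(3) by simp
      then have fx: "m0 \<le> norm (P p - P x)" using far a(2) by blast
      have "yv = lam *\<^sub>R (P p - P x) - s *\<^sub>R u" unfolding yv_def a(1) by (simp add: algebra_simps)
      then have "norm (lam *\<^sub>R (P p - P x)) \<le> norm yv + norm (s *\<^sub>R u)"
        by (metis diff_add_cancel norm_triangle_ineq)
      moreover have "lam \<ge> 0" unfolding lam_def using L1 dpos m0pos by simp
      ultimately have "lam * norm (P p - P x) \<le> norm yv + s * norm u" using s0 by simp
      moreover have "lam * m0 \<le> lam * norm (P p - P x)" using fx \<open>lam \<ge> 0\<close> by (rule mult_left_mono)
      moreover have "lam * m0 = L * (d + norm u)" unfolding lam_def using m0pos by simp
      moreover have "s * norm u \<le> L * norm u" using False eps by (intro mult_right_mono) auto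
      ultimately have "L * d \<le> norm yv" by (simp add: algebra_simps)
      moreover have "d * (L - \<epsilon>) \<le> L * d" using dpos eps by (simp add: algebra_simps)
      ultimately show ?thesis by linarith
    qed
    then show "d * (L - \<epsilon>) \<le> dist (lam *\<^sub>R P p) a" by (simp add: yv_def dist_norm)
  qed
  have "infdist (lam *\<^sub>R P p) A \<le> max C 0 * norm u"
    using ok_use[OF ok Ane inhull _ bd] by simp
  then have "d * (L - \<epsilon>) \<le> C * norm u" using lower C1 by simp
  also have "\<dots> \<le> C * (d * (1 + \<epsilon>))" using normu C1 by (intro mult_left_mono) auto
  finally have "d * (L - \<epsilon>) \<le> d * (C * (1 + \<epsilon>))" by (simp add: algebra_simps)
  then show ?thesis using dpos L_def by simp
qed



lemma lb_all:
  fixes n :: nat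
  assumes dimn: "dim (UNIV :: 'a::real_normed_vector set) = n" and n1: "n \<ge> 1"
    and ok: "hull_const_ok TYPE('a) C"
  shows "1 \<le> C \<and> log 2 n \<le> C"
proof -
  obtain B :: "'a set" where B: "independent B" "UNIV \<subseteq> span B" "card B = n"
    using basis_exists[of "UNIV::'a set"] dimn by auto
  then obtain w where "w \<in> B" using n1 by fastforce
  then have "w \<noteq> 0" using B(1) dependent_zero by blast
  then have C1: "1 \<le> C" using two_point[OF ok] by blast
  have "log 2 n \<le> C"
  proof (cases "n = 1")
    case True then show ?thesis using C1 by simp
  next
    case False
    then have n2: "n \<ge> 2" using n1 by simp
    show ?thesis
    proof (rule field_le_epsilon)
      fix e :: real assume "0 < e"
      define \<epsilon> where "\<epsilon> = e / (C + 1)"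
      have "0 < \<epsilon>" using \<open>0 < e\<close> C1 by (simp add: \<epsilon>_def)
      have "log 2 n - \<epsilon> \<le> C * (1 + \<epsilon>)" by (rule lb_eps[OF dimn n2 ok C1 \<open>0 < \<epsilon>\<close>])
      moreover have "\<epsilon> * (C + 1) = e" using C1 by (simp add: \<epsilon>_def)
      ultimately show "log 2 n \<le> C + e" by (simp add: algebra_simps)
    qed
  qed
  then show ?thesis using C1 by simp
qed

lemma ceil_log_le:
  fixes n :: nat assumes "n \<ge> 1"
  shows "real_of_int \<lceil>log 2 (real n + 1)\<rceil> \<le> log 2 (real n) + 1"
proof -
  define j where "j = \<lfloor>log 2 (real n)\<rfloor>"
  have j0: "j \<ge> 0" unfolding j_def using assms by simp
  have "log 2 (real n) < j + 1" unfolding j_def by linarith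
  then have "real n < 2 powr (j + 1)" using assms by (simp add: log_less_iff)
  also have "2 powr (j + 1) = real (2 ^ nat (j + 1))"
    using j0 by (simp add: powr_realpow[symmetric])
  finally have "n < 2 ^ nat (j + 1)" by linarith
  then have "real n + 1 \<le> real (2 ^ nat (j + 1))" by linarith
  also have "\<dots> = 2 powr (j + 1)" using j0 by (simp add: powr_realpow[symmetric])
  finally have "log 2 (real n + 1) \<le> log 2 (2 powr (j + 1))" by (subst log_le_cancel_iff) auto
  then have "log 2 (real n + 1) \<le> j + 1" by simp
  then have "\<lceil>log 2 (real n + 1)\<rceil> \<le> j + 1" by (simp add: ceiling_le_iff)
  moreover have "j \<le> log 2 (real n)" unfolding j_def by linarith
  ultimately show ?thesis by linarith
qed

lemma dyadic_bound:
  assumes ac: "approx_convex_on (std_simplex n) f" and vert: "\<forall>j\<le>n. f (vertex j) \<le> 0"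
  shows "\<forall>x\<in>std_simplex n. card {i. i \<le> n \<and> x i \<noteq> 0} \<le> 2 ^ k \<longrightarrow> f x \<le> real k"
proof (induction k)
  case 0
  show ?case
  proof (intro ballI impI)
    fix x assume x: "x \<in> std_simplex n" and c: "card {i. i \<le> n \<and> x i \<noteq> 0} \<le> 2 ^ 0"
    define S where "S = {i. i \<le> n \<and> x i \<noteq> 0}"
    have finS: "finite S" unfolding S_def by simp
    have sum1: "(\<Sum>i\<le>n. x i) = 1" using x by (simp add: std_simplex_def)
    have "(\<Sum>i\<le>n. x i) = (\<Sum>i\<in>S. x i)" unfolding S_def by (intro sum.mono_neutral_right) auto
    then have "S \<noteq> {}" using sum1 by auto
    have cS: "card S \<le> 1" using c unfolding S_def by simp
    have "card S \<noteq> 0" using finS \<open>S \<noteq> {}\<close> by simp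
    then have "card S = 1" using cS by linarith
    then obtain j where S: "S = {j}" by (rule card_1_singletonE)
    then have jn: "j \<le> n" unfolding S_def by auto
    have xj: "x j = 1" using sum1 \<open>(\<Sum>i\<le>n. x i) = (\<Sum>i\<in>S. x i)\<close> S by simp
    have "x = vertex j"
    proof
      fix i show "x i = vertex j i"
      proof (cases "i \<le> n")
        case True then show ?thesis using S xj unfolding S_def vertex_def by auto
      next
        case False then show ?thesis using x jn unfolding std_simplex_def vertex_def by auto
      qed
    qed
    then show "f x \<le> real 0" using vert jn by simp
  qed
next
  case (Suc k)
  show ?case
  proof (intro ballI impI)
    fix x assume x: "x \<in> std_simplex n" and c: "card {i. i \<le> n \<and> x i \<noteq> 0} \<le> 2 ^ Suc k"
    define S where "S = {i. i \<le> n \<and> x i \<noteq> 0}"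
    have finS: "finite S" unfolding S_def by simp
    have x0: "\<forall>i. 0 \<le> x i" "\<forall>i>n. x i = 0" "(\<Sum>i\<le>n. x i) = 1" using x by (auto simp: std_simplex_def)
    show "f x \<le> real (Suc k)"
    proof (cases "card S \<le> 2 ^ k")
      case True
      then show ?thesis using Suc.IH x unfolding S_def by fastforce
    next
      case False
      then have "2 ^ k \<le> card S" by simp
      then obtain S1 where S1: "S1 \<subseteq> S" "card S1 = 2 ^ k"
        by (rule obtain_subset_with_card_n)
      define S2 where "S2 = S - S1"
      have cS2: "card S2 = card S - 2 ^ k" unfolding S2_def using S1 finS by (simp add: card_Diff_subset finite_subset)
      have fin1: "finite S1" "finite S2" using S1 finS finite_subset unfolding S2_def by auto
      have S1ne: "S1 \<noteq> {}" using S1 by auto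
      have S2ne: "S2 \<noteq> {}" using cS2 False by auto
      have pos: "0 < x i" if "i \<in> S" for i using that x0(1) unfolding S_def by (simp add: order_less_le)
      define a where "a = (\<Sum>i\<in>S1. x i)"
      have sumS: "(\<Sum>i\<le>n. x i) = (\<Sum>i\<in>S. x i)" unfolding S_def by (intro sum.mono_neutral_right) auto
      have split: "(\<Sum>i\<in>S. x i) = a + (\<Sum>i\<in>S2. x i)"
        unfolding a_def S2_def using sum.subset_diff[OF S1(1) finS, of x] by simp
      have apos: "0 < a" unfolding a_def using S1ne fin1 S1 pos by (intro sum_pos) auto
      have bpos: "0 < (\<Sum>i\<in>S2. x i)" using S2ne fin1 pos unfolding S2_def by (intro sum_pos) auto
      have b: "(\<Sum>i\<in>S2. x i) = 1 - a" using split sumS x0(3) by simp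
      define y where "y i = (if i \<in> S1 then x i / a else 0)" for i
      define z where "z i = (if i \<in> S2 then x i / (1 - a) else 0)" for i
      have a1: "a < 1" using b bpos by simp
      have Sn: "S \<subseteq> {..n}" unfolding S_def by auto
      have yS: "y \<in> std_simplex n"
      proof -
        have "(\<Sum>i\<le>n. y i) = (\<Sum>i\<in>S1. y i)"
          using S1 Sn unfolding y_def by (intro sum.mono_neutral_right) auto
        also have "\<dots> = (\<Sum>i\<in>S1. x i) / a" unfolding y_def by (simp add: sum_divide_distrib)
        also have "\<dots> = 1" using apos a_def by simp
        finally show ?thesis using x0 apos S1 Sn unfolding std_simplex_def y_def by auto
      qed
      have zS: "z \<in> std_simplex n"
      proof -
        have "(\<Sum>i\<le>n. z i) = (\<Sum>i\<in>S2. z i)"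
          using Sn unfolding z_def S2_def by (intro sum.mono_neutral_right) auto
        also have "\<dots> = (\<Sum>i\<in>S2. x i) / (1 - a)" unfolding z_def by (simp add: sum_divide_distrib)
        also have "\<dots> = 1" using a1 b by simp
        finally show ?thesis using x0 a1 Sn unfolding std_simplex_def z_def S2_def by auto
      qed
      have cy: "card {i. i \<le> n \<and> y i \<noteq> 0} \<le> 2 ^ k"
      proof -
        have "{i. i \<le> n \<and> y i \<noteq> 0} \<subseteq> S1" unfolding y_def by auto
        then show ?thesis using S1 fin1 card_mono by metis
      qed
      have cz: "card {i. i \<le> n \<and> z i \<noteq> 0} \<le> 2 ^ k"
      proof -
        have "{i. i \<le> n \<and> z i \<noteq> 0} \<subseteq> S2" unfolding z_def by auto
        then have "card {i. i \<le> n \<and> z i \<noteq> 0} \<le> card S2" using fin1 card_mono by metis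
        then show ?thesis using cS2 c unfolding S_def by simp
      qed
      have fy: "f y \<le> k" using Suc.IH yS cy by blast
      have fz: "f z \<le> k" using Suc.IH zS cz by blast
      have xeq: "x = (\<lambda>i. a * y i + (1 - a) * z i)"
      proof
        fix i
        show "x i = a * y i + (1 - a) * z i"
        proof (cases "i \<in> S")
          case True
          then show ?thesis using apos a1 unfolding y_def z_def S2_def by auto
        next
          case False
          then have "x i = 0" using x0(2) unfolding S_def by (cases "i \<le> n") auto
          then show ?thesis using False S1 unfolding y_def z_def S2_def by auto
        qed
      qed
      have "f (\<lambda>i. a * y i + (1 - a) * z i) \<le> a * f y + (1 - a) * f z + 1"
        using ac[unfolded approx_convex_on_def, rule_format, OF yS zS, of a] apos a1 by simp
      then have "f x \<le> a * f y + (1 - a) * f z + 1" using xeq by simp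
      also have "\<dots> \<le> a * k + (1 - a) * k + 1"
        using fy fz apos a1 by (intro add_mono mult_left_mono) auto
      finally show ?thesis by (simp add: algebra_simps)
    qed
  qed
qed

lemma kappa_le_ceil:
  fixes n :: nat
  shows "kappa n \<le> ereal (real_of_int \<lceil>log 2 (real n + 1)\<rceil>)"
  unfolding kappa_def
proof (intro Sup_least, clarify)
  fix f x assume x: "x \<in> std_simplex n" and ac: "approx_convex_on (std_simplex n) f"
    and v: "\<forall>j\<le>n. f (vertex j) \<le> 0"
  define K where "K = nat \<lceil>log 2 (real n + 1)\<rceil>"
  have "log 2 (real n + 1) \<ge> 0" by simp
  then have K: "real K = real_of_int \<lceil>log 2 (real n + 1)\<rceil>" unfolding K_def by simp
  have "card {i. i \<le> n \<and> x i \<noteq> 0} \<le> card {..n}" by (intro card_mono) auto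
  also have "\<dots> = n + 1" by simp
  also have "n + 1 \<le> (2::nat) ^ K"
  proof -
    have "log 2 (real n + 1) \<le> real K" using K by linarith
    then have "real n + 1 \<le> 2 powr real K" by (simp add: log_le_iff)
    also have "\<dots> = real (2 ^ K)" by (simp add: powr_realpow)
    finally show ?thesis by linarith
  qed
  finally have "f x \<le> real K" using dyadic_bound[OF ac v] x by blast
  then show "ereal (f x) \<le> ereal (real_of_int \<lceil>log 2 (real n + 1)\<rceil>)" using K by simp
qed

lemma kappa_ge_1:
  fixes n :: nat assumes "n \<ge> 1"
  shows "1 \<le> kappa n"
proof -
  define f where "f x = (if \<exists>j\<le>n. x = vertex j then 0 else (1::real))" for x
  define x where "x = (\<lambda>i::nat. if i = 0 \<or> i = 1 then 1/2 else (0::real))"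
  have xS: "x \<in> std_simplex n"
  proof -
    have "(\<Sum>i\<le>n. x i) = (\<Sum>i\<in>{0,1}. x i)"
      using assms unfolding x_def by (intro sum.mono_neutral_right) auto
    then show ?thesis using assms unfolding std_simplex_def x_def by auto
  qed
  have nv: "x \<noteq> vertex j" for j
  proof
    assume "x = vertex j"
    then have "x 0 = vertex j 0" by simp
    then show False unfolding x_def vertex_def by (auto split: if_splits)
  qed
  have fx: "f x = 1" unfolding f_def using nv by auto
  have f01: "0 \<le> f y \<and> f y \<le> 1" for y unfolding f_def by auto
  have ac: "approx_convex_on (std_simplex n) f"
    unfolding approx_convex_on_def
  proof (intro ballI)
    fix y z t assume "t \<in> {0..(1::real)}"
    then have "0 \<le> t * f y + (1 - t) * f z" using f01 by (intro add_nonneg_nonneg mult_nonneg_nonneg) auto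
    then show "f (\<lambda>i. t * y i + (1 - t) * z i) \<le> t * f y + (1 - t) * f z + 1" using f01[of "\<lambda>i. t * y i + (1 - t) * z i"] by linarith
  qed
  have v: "\<forall>j\<le>n. f (vertex j) \<le> 0" unfolding f_def by auto
  have "ereal (f x) \<le> kappa n" unfolding kappa_def using xS ac v by (intro Sup_upper) blast
  then show ?thesis using fx by (simp add: one_ereal_def)
qed



lemma card_gt_dim_affine_dependent:
  fixes S :: "'a::real_vector set"
  assumes "dim (UNIV::'a set) = n" "finite S" "n + 1 < card S" and n1: "n \<ge> 1"
  shows "affine_dependent S"
proof (rule ccontr)
  assume nd: "\<not> affine_dependent S"
  have "S \<noteq> {}" using assms(3) by auto
  then obtain a where a: "a \<in> S" by blast
  have ind: "independent ((\<lambda>x. -a + x) ` (S - {a}))"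
    using nd affine_dependent_iff_dependent2[OF a] by simp
  have "inj_on (\<lambda>x. -a + x) (S - {a})" by (auto simp: inj_on_def)
  then have "card ((\<lambda>x. -a + x) ` (S - {a})) = card S - 1"
    using a assms(2) by (simp add: card_image)
  moreover have "card ((\<lambda>x. -a + x) ` (S - {a})) \<le> n"
  proof -
    obtain Bs :: "'a set" where Bs: "independent Bs" "UNIV \<subseteq> span Bs" "card Bs = n"
      using basis_exists[of "UNIV::'a set"] assms(1) by auto
    have "finite Bs" using Bs(3) n1 by (metis card.infinite not_one_le_zero)
    then show ?thesis using independent_span_bound[OF _ ind] Bs by auto
  qed
  ultimately show False using assms by linarith
qed

lemma caratheodory_dim:
  fixes p :: "'a::real_vector set"
  assumes dimn: "dim (UNIV::'a set) = N" and y: "y \<in> convex hull p" and N1: "N \<ge> 1"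
  shows "\<exists>S u. finite S \<and> S \<subseteq> p \<and> card S \<le> N + 1 \<and>
        (\<forall>x\<in>S. 0 \<le> u x) \<and> sum u S = 1 \<and> sum (\<lambda>v. u v *\<^sub>R v) S = y"
proof -
  let ?P = "\<lambda>n. \<exists>S u. finite S \<and> card S = n \<and> S \<subseteq> p \<and> (\<forall>x\<in>S. 0 \<le> u x) \<and>
    sum u S = 1 \<and> (\<Sum>v\<in>S. u v *\<^sub>R v) = y"
  have "\<exists>S u. finite S \<and> S \<subseteq> p \<and> (\<forall>x\<in>S. 0 \<le> u x) \<and> sum u S = 1 \<and> (\<Sum>v\<in>S. u v *\<^sub>R v) = y"
    using y unfolding convex_hull_explicit by auto
  then obtain N0 where "?P N0" by auto
  then have "\<exists>n\<le>N0. (\<forall>k<n. \<not> ?P k) \<and> ?P n"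
    by (rule_tac ex_least_nat_le, auto)
  then obtain n where "?P n" and smallest: "\<forall>k<n. \<not> ?P k"
    by blast
  then obtain S u where S: "finite S" "card S = n" "S\<subseteq>p"
    and u: "\<forall>x\<in>S. 0 \<le> u x" "sum u S = 1"  "(\<Sum>v\<in>S. u v *\<^sub>R v) = y" by auto
  have "card S \<le> N + 1"
  proof (rule ccontr, simp only: not_le)
    assume "N + 1 < card S"
    then have "affine_dependent S"
      using card_gt_dim_affine_dependent[OF dimn S(1) _ N1] by blast
    then obtain w v where wv: "sum w S = 0" "v\<in>S" "w v \<noteq> 0" "(\<Sum>v\<in>S. w v *\<^sub>R v) = 0"
      using affine_dependent_explicit_finite[OF S(1)] by auto
    define i where "i = (\<lambda>v. (u v) / (- w v)) ` {v\<in>S. w v < 0}"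
    define t where "t = Min i"
    have "\<exists>x\<in>S. w x < 0"
      by (smt (verit, best) S(1) sum_pos2 wv)
    then have "i \<noteq> {}" unfolding i_def by auto
    then have "t \<ge> 0"
      using Min_ge_iff[of i 0] and S(1) u[unfolded le_less]
      unfolding t_def i_def
      by (auto simp: divide_le_0_iff)
    have t: "\<forall>v\<in>S. u v + t * w v \<ge> 0"
    proof
      fix v
      assume "v \<in> S"
      then have v: "0 \<le> u v"
        using u(1) by blast
      show "0 \<le> u v + t * w v"
      proof (cases "w v < 0")
        case False
        thus ?thesis using v \<open>t\<ge>0\<close> by auto
      next
        case True
        then have "t \<le> u v / (- w v)"
          using \<open>v\<in>S\<close> S unfolding t_def i_def by (auto intro: Min_le)
        then show ?thesis
          unfolding real_0_le_add_iff
          using True neg_le_minus_divide_eq by auto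
      qed
    qed
    obtain a where "a \<in> S" and "t = (\<lambda>v. (u v) / (- w v)) a" and "w a < 0"
      using Min_in[OF _ \<open>i\<noteq>{}\<close>] and S(1) unfolding i_def t_def by auto
    then have a: "a \<in> S" "u a + t * w a = 0" by auto
    have *: "\<And>f. sum f (S - {a}) = sum f S - ((f a)::'b::ab_group_add)"
      unfolding sum.remove[OF S(1) \<open>a\<in>S\<close>] by auto
    have "(\<Sum>v\<in>S. u v + t * w v) = 1"
      by (metis add.right_neutral mult_zero_right sum.distrib sum_distrib_left u(2) wv(1))
    moreover have "(\<Sum>v\<in>S. u v *\<^sub>R v + (t * w v) *\<^sub>R v) - (u a *\<^sub>R a + (t * w a) *\<^sub>R a) = y"
      unfolding sum.distrib u(3) scaleR_scaleR[symmetric] scaleR_right.sum [symmetric] wv(4)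
      using a(2) [THEN eq_neg_iff_add_eq_0 [THEN iffD2]] by simp
    ultimately have "?P (n - 1)"
      apply (rule_tac x="(S - {a})" in exI)
      apply (rule_tac x="\<lambda>v. u v + t * w v" in exI)
      using S t a
      apply (auto simp: * scaleR_left_distrib)
      done
    then show False
      using smallest[THEN spec[where x="n - 1"]] S(2) a(1) by (cases n) auto
  qed
  then show ?thesis using S u by auto
qed

lemma caratheodory_idx:
  fixes p :: "'a::real_vector set"
  assumes dimn: "dim (UNIV::'a set) = n" and y: "y \<in> convex hull p" and n1: "n \<ge> 1"
  shows "\<exists>c a. c \<in> std_simplex n \<and> (\<forall>i\<le>n. a i \<in> p) \<and> y = (\<Sum>i\<le>n. c i *\<^sub>R a i)"
proof -
  obtain S u where S: "finite S" "S \<subseteq> p" "card S \<le> n + 1" "\<forall>x\<in>S. 0 \<le> u x" "sum u S = 1"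
    "(\<Sum>v\<in>S. u v *\<^sub>R v) = y"
    using caratheodory_dim[OF dimn y n1] by blast
  have "S \<noteq> {}" using S(5) by auto
  obtain g where g: "bij_betw g {0..<card S} S" using ex_bij_betw_nat_finite[OF S(1)] by blast
  have "0 < card S" using S(1) \<open>S \<noteq> {}\<close> by (simp add: card_gt_0_iff)
  then have "g 0 \<in> g ` {0..<card S}" by simp
  then have g0: "g 0 \<in> S" using bij_betw_imp_surj_on[OF g] by simp
  define a where "a i = (if i < card S then g i else g 0)" for i
  define c where "c i = (if i < card S then u (g i) else 0)" for i
  have sub: "{0..<card S} \<subseteq> {..n}" using S(3) by auto
  have aS: "\<forall>i\<le>n. a i \<in> p" using g g0 S(2) unfolding a_def by (auto simp: bij_betw_def)
  have e1: "(\<Sum>i\<le>n. c i) = (\<Sum>i\<in>{0..<card S}. u (g i))"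
    using sub unfolding c_def by (intro sum.mono_neutral_cong_right) auto
  have e2: "(\<Sum>i\<in>{0..<card S}. u (g i)) = sum u S" using sum.reindex_bij_betw[OF g, of u] .
  have e3: "(\<Sum>i\<le>n. c i *\<^sub>R a i) = (\<Sum>i\<in>{0..<card S}. u (g i) *\<^sub>R g i)"
    using sub unfolding c_def a_def by (intro sum.mono_neutral_cong_right) auto
  have e4: "(\<Sum>i\<in>{0..<card S}. u (g i) *\<^sub>R g i) = (\<Sum>v\<in>S. u v *\<^sub>R v)"
    using sum.reindex_bij_betw[OF g, of "\<lambda>v. u v *\<^sub>R v"] .
  have cS: "c \<in> std_simplex n"
    unfolding std_simplex_def using e1 e2 S(3,4,5) g
    by (auto simp: c_def bij_betw_def)
  show ?thesis using cS aS e3 e4 S(6) by metis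
qed



lemma haus_ge1: "x \<in> A \<Longrightarrow> ereal (infdist x B) \<le> haus A B"
  unfolding haus_def by (intro Sup_upper) auto

lemma D_nonneg:
  fixes A :: "'a::real_normed_vector set"
  assumes "A \<noteq> {}"
  shows "0 \<le> (SUP t\<in>{0..1}. haus (mix t A) A)"
proof -
  obtain a where a: "a \<in> A" using assms by blast
  have "ereal (infdist a (mix 0 A)) \<le> haus (mix 0 A) A" using haus_ge[OF a] .
  also have "\<dots> \<le> (SUP t\<in>{0..1}. haus (mix t A) A)" by (intro SUP_upper) auto
  finally show ?thesis using a subset_mix[of A 0] by (simp add: subset_iff zero_ereal_def)
qed

lemma mix_bound:
  fixes A :: "'a::real_normed_vector set"
  assumes "(SUP t\<in>{0..1}. haus (mix t A) A) = ereal d" "t \<in> {0..1}" "z \<in> mix t A"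
  shows "infdist z A \<le> d"
proof -
  have "ereal (infdist z A) \<le> haus (mix t A) A" using haus_ge1[OF assms(3)] .
  also have "\<dots> \<le> (SUP t\<in>{0..1}. haus (mix t A) A)" using assms(2) by (intro SUP_upper) auto
  finally show ?thesis using assms(1) by simp
qed

lemma hull_point_bound:
  fixes A :: "'a::real_normed_vector set"
  assumes dimn: "dim (UNIV :: 'a set) = n" and n1: "n \<ge> 1" and kap: "kappa n = ereal k"
    and ne: "A \<noteq> {}" and D: "(SUP t\<in>{0..1}. haus (mix t A) A) = ereal d" and k0: "k > 0"
    and y: "y \<in> convex hull A"
  shows "infdist y A \<le> k * d"
proof (rule field_le_epsilon)
  fix e :: real assume e: "0 < e"
  have d0: "0 \<le> d" using D_nonneg[OF ne] D by simp
  define D' where "D' = d + e / k"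
  have D'pos: "D' > 0" unfolding D'_def using d0 e k0 by (simp add: add_nonneg_pos)
  have mb: "infdist z A \<le> D'" if "t \<in> {0..1}" "z \<in> mix t A" for t z
    using mix_bound[OF D that] e k0 unfolding D'_def by (smt (verit) divide_pos_pos)
  obtain c a where ca: "c \<in> std_simplex n" "\<forall>i\<le>n. a i \<in> A" "y = (\<Sum>i\<le>n. c i *\<^sub>R a i)"
    using caratheodory_idx[OF dimn y n1] by blast
  define P where "P x = (\<Sum>i\<le>n. x i *\<^sub>R a i)" for x
  define f where "f x = infdist (P x) A / D'" for x
  have key: "infdist (P (\<lambda>i. t * x i + (1 - t) * x' i)) A
             \<le> t * infdist (P x) A + (1 - t) * infdist (P x') A + D'"
    if t: "t \<in> {0..1}" for x x' t
  proof (rule field_le_epsilon)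
    fix e' :: real assume e': "0 < e'"
    have t01: "0 \<le> t" "t \<le> 1" using t by auto
    obtain \<alpha> where \<alpha>: "\<alpha> \<in> A" "dist (P x) \<alpha> < infdist (P x) A + e'"
      using infdist_approx[OF ne, of "P x" "infdist (P x) A + e'"] e' by auto
    obtain \<beta> where \<beta>: "\<beta> \<in> A" "dist (P x') \<beta> < infdist (P x') A + e'"
      using infdist_approx[OF ne, of "P x'" "infdist (P x') A + e'"] e' by auto
    define q where "q = t *\<^sub>R \<alpha> + (1 - t) *\<^sub>R \<beta>"
    have qm: "q \<in> mix t A" unfolding q_def mix_def using \<alpha> \<beta> by blast
    have PQ: "P (\<lambda>i. t * x i + (1 - t) * x' i) = t *\<^sub>R P x + (1 - t) *\<^sub>R P x'"
      unfolding P_def by (simp add: scaleR_add_left sum.distrib scaleR_sum_right)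
    have "dist (P (\<lambda>i. t * x i + (1 - t) * x' i)) q
          = norm (t *\<^sub>R (P x - \<alpha>) + (1 - t) *\<^sub>R (P x' - \<beta>))"
      unfolding PQ q_def dist_norm by (simp add: algebra_simps)
    also have "\<dots> \<le> norm (t *\<^sub>R (P x - \<alpha>)) + norm ((1 - t) *\<^sub>R (P x' - \<beta>))"
      by (rule norm_triangle_ineq)
    also have "\<dots> = t * dist (P x) \<alpha> + (1 - t) * dist (P x') \<beta>"
      using t01 by (simp add: dist_norm)
    also have "\<dots> \<le> t * (infdist (P x) A + e') + (1 - t) * (infdist (P x') A + e')"
      using t01 \<alpha> \<beta> by (intro add_mono mult_left_mono) auto
    finally have dq: "dist (P (\<lambda>i. t * x i + (1 - t) * x' i)) q
        \<le> t * infdist (P x) A + (1 - t) * infdist (P x') A + e'" by (simp add: algebra_simps)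
    have "infdist (P (\<lambda>i. t * x i + (1 - t) * x' i)) A
          \<le> infdist q A + dist (P (\<lambda>i. t * x i + (1 - t) * x' i)) q"
      by (rule infdist_triangle)
    also have "\<dots> \<le> D' + (t * infdist (P x) A + (1 - t) * infdist (P x') A + e')"
      using mb[OF t qm] dq by (rule add_mono)
    finally show "infdist (P (\<lambda>i. t * x i + (1 - t) * x' i)) A
             \<le> t * infdist (P x) A + (1 - t) * infdist (P x') A + D' + e'" by simp
  qed
  have ac: "approx_convex_on (std_simplex n) f"
    unfolding approx_convex_on_def
  proof (intro ballI)
    fix x x' t assume t: "t \<in> {0..(1::real)}"
    have "f (\<lambda>i. t * x i + (1 - t) * x' i) \<le> (t * infdist (P x) A + (1 - t) * infdist (P x') A + D') / D'"
      unfolding f_def using key[OF t] D'pos by (simp add: divide_right_mono)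
    also have "\<dots> = t * f x + (1 - t) * f x' + 1"
      unfolding f_def using D'pos by (simp add: field_simps)
    finally show "f (\<lambda>i. t * x i + (1 - t) * x' i) \<le> t * f x + (1 - t) * f x' + 1" .
  qed
  have vert: "\<forall>j\<le>n. f (vertex j) \<le> 0"
  proof (intro allI impI)
    fix j assume j: "j \<le> n"
    have "P (vertex j) = (\<Sum>i\<le>n. if i = j then a i else 0)"
      unfolding P_def vertex_def by (intro sum.cong) auto
    also have "\<dots> = a j" using j by (simp add: sum.delta)
    finally have "P (vertex j) \<in> A" using ca(2) j by simp
    then show "f (vertex j) \<le> 0" unfolding f_def by simp
  qed
  have "ereal (f c) \<le> kappa n" unfolding kappa_def using ca(1) ac vert
    by (intro Sup_upper) blast
  then have "f c \<le> k" using kap by simp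
  then have "infdist y A / D' \<le> k" unfolding f_def P_def using ca(3) by simp
  then have "infdist y A \<le> k * D'" using D'pos by (simp add: field_simps)
  also have "k * D' = k * d + e" unfolding D'_def using k0 by (simp add: field_simps)
  finally show "infdist y A \<le> k * d + e" .
qed

lemma ok_upper:
  assumes dimn: "dim (UNIV :: 'a::real_normed_vector set) = n" and n1: "n \<ge> 1"
    and kap: "kappa n = ereal k" and k0: "k > 0"
  shows "hull_const_ok TYPE('a) k"
  unfolding hull_const_ok_def
proof (intro allI impI)
  fix A :: "'a set" assume ne: "A \<noteq> {}"
  define D where "D = (SUP t\<in>{0..1}. haus (mix t A) A)"
  have D0: "0 \<le> D" using D_nonneg[OF ne] unfolding D_def .
  have "haus A (convex hull A) \<le> ereal k * D"
  proof (cases D)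
    case (real d)
    have "haus A (convex hull A) \<le> ereal (k * d)"
    proof (rule haus_le)
      fix x assume "x \<in> A"
      then have "x \<in> convex hull A" by (rule hull_inc)
      then show "infdist x (convex hull A) \<le> k * d" using D0 real k0 by simp
    next
      fix y assume "y \<in> convex hull A"
      then show "infdist y A \<le> k * d"
        using hull_point_bound[OF dimn n1 kap ne _ k0] real unfolding D_def by blast
    qed
    then show ?thesis using real by simp
  next
    case PInf then show ?thesis using k0 by simp
  next
    case MInf then show ?thesis using D0 by simp
  qed
  then show "haus A (convex hull A) \<le> ereal k * (SUP t\<in>{0..1}. haus (mix t A) A)"
    unfolding D_def .
qed



theorem theorem3p1:
  fixes n :: nat
  assumes "n \<ge> 1" and "dim (UNIV :: 'a::real_normed_vector set) = n"
  shows "\<exists>C>0. hull_const_ok TYPE('a) C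
      \<and> (\<forall>C'>0. hull_const_ok TYPE('a) C' \<longrightarrow> C \<le> C')
      \<and> log 2 (real n) \<le> C \<and> ereal C \<le> kappa n
      \<and> C \<le> real_of_int \<lceil>log 2 (real n + 1)\<rceil>
      \<and> real_of_int \<lceil>log 2 (real n + 1)\<rceil> \<le> log 2 (real n) + 1"
proof -
  note n1 = assms(1) and dimn = assms(2)
  define K where "K = real_of_int \<lceil>log 2 (real n + 1)\<rceil>"
  have kK: "kappa n \<le> ereal K" unfolding K_def by (rule kappa_le_ceil)
  have k1: "1 \<le> kappa n" using kappa_ge_1[OF n1] .
  obtain k where kap: "kappa n = ereal k" using kK k1 by (cases "kappa n") auto
  have k1': "1 \<le> k" and kK': "k \<le> K" using kK k1 kap by (auto simp: one_ereal_def)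
  have okk: "hull_const_ok TYPE('a) k" using ok_upper[OF dimn n1 kap] k1' by simp
  define S where "S = {C. C > 0 \<and> hull_const_ok TYPE('a) C}"
  have kS: "k \<in> S" unfolding S_def using okk k1' by simp
  have Sne: "S \<noteq> {}" using kS by blast
  have Slb: "1 \<le> C \<and> log 2 (real n) \<le> C" if "C \<in> S" for C
    using lb_all[OF dimn n1] that unfolding S_def by blast
  have bdd: "bdd_below S" unfolding bdd_below_def using Slb by blast
  define C0 where "C0 = Inf S"
  have C01: "1 \<le> C0" unfolding C0_def using Slb Sne by (intro cInf_greatest) auto
  have C0log: "log 2 (real n) \<le> C0" unfolding C0_def using Slb Sne by (intro cInf_greatest) auto
  have C0k: "C0 \<le> k" unfolding C0_def using kS bdd by (rule cInf_lower)
  have least: "C0 \<le> C'" if "C' > 0" "hull_const_ok TYPE('a) C'" for C'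
    unfolding C0_def using that bdd by (intro cInf_lower) (auto simp: S_def)
  have okC0: "hull_const_ok TYPE('a) C0"
    unfolding hull_const_ok_def
  proof (intro allI impI)
    fix A :: "'a set" assume ne: "A \<noteq> {}"
    define D where "D = (SUP t\<in>{0..1}. haus (mix t A) A)"
    have D0: "0 \<le> D" using D_nonneg[OF ne] unfolding D_def .
    have allS: "haus A (convex hull A) \<le> ereal C * D" if "C \<in> S" for C
      using that ne unfolding S_def hull_const_ok_def D_def by blast
    have "haus A (convex hull A) \<le> ereal C0 * D"
    proof (cases D)
      case (real d)
      have d0: "0 \<le> d" using D0 real by simp
      have hk: "haus A (convex hull A) \<le> ereal (k * d)" using allS[OF kS] real by simp
      show ?thesis
      proof (cases "haus A (convex hull A)")
        case (real h)
        have hC: "h \<le> C * d" if "C \<in> S" for C using allS[OF that] real \<open>D = ereal d\<close> by simp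
        have "h \<le> C0 * d"
        proof (cases "d = 0")
          case True then show ?thesis using hC[OF kS] by simp
        next
          case False
          then have dp: "d > 0" using d0 by simp
          have "h / d \<le> C0" unfolding C0_def
            using Sne hC dp by (intro cInf_greatest) (auto simp: divide_le_eq)
          then show ?thesis using dp by (simp add: divide_le_eq mult.commute)
        qed
        then show ?thesis using real \<open>D = ereal d\<close> by simp
      next
        case PInf then show ?thesis using hk by simp
      next
        case MInf then show ?thesis by simp
      qed
    next
      case PInf then show ?thesis using C01 by simp
    next
      case MInf then show ?thesis using D0 by simp
    qed
    then show "haus A (convex hull A) \<le> ereal C0 * (SUP t\<in>{0..1}. haus (mix t A) A)"
      unfolding D_def .
  qed
  show ?thesis
  proof (intro exI[of _ C0] conjI allI impI)
    show "0 < C0" using C01 by simp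
    show "hull_const_ok TYPE('a) C0" by (rule okC0)
    show "C0 \<le> C'" if "0 < C'" "hull_const_ok TYPE('a) C'" for C' using least that by blast
    show "log 2 (real n) \<le> C0" by (rule C0log)
    show "ereal C0 \<le> kappa n" using C0k kap by simp
    show "C0 \<le> real_of_int \<lceil>log 2 (real n + 1)\<rceil>" using C0k kK' K_def by simp
    show "real_of_int \<lceil>log 2 (real n + 1)\<rceil> \<le> log 2 (real n) + 1" by (rule ceil_log_le[OF n1])
  qed
qed

end
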